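(* Let $T$ be a node-weighted MFQST with Steiner point cost $c>0$. Let $P$ be a path $u=x_0,x_1,\dots,x_{p+1}=v$ in $T$ ($p\ge0$) whose interior nodes $x_1,\dots,x_p$ are all Steiner points of degree $2$. Let $f$ be the common flow on the edges of $P$. Then $$p(p+1)\le\frac{f\,|uv|^2}{c}\le(p+2)(p+1).$$
   Context: Let $Z=\{z_1,\dots,z_n\}\subset\mathbb{R}^2$ ($n\ge 1$) be a set of sources and $z_{BS}\in\mathbb{R}^2\setminus Z$ a sink; each source has supply $1$. A flow-dependent quadratic Steiner tree (FQST) consists of a finite set $S\subset\mathbb{R}^2$ of Steiner points and a tree $T$ with vertex set $Z\cup S\cup\{z_{BS}\}$ whose edges are directed towards $z_{BS}$. Every node other than the sink has exactly one out-edge, and the sink has none. Each edge $e$ carries a positive flow $f(e)$ such that: - at each source, the flow on its out-edge minus the total flow on its in-edges equals $1$; - at each Steiner point, the out-flow equals the total in-flow; - the sink receives total flow $n$. The cost is $L(T)=\sum_{e\in E(T)} f(e)|e|^2$. For a fixed $c>0$, a node-weighted MFQST is an FQST minimising $L_c(T)=L(T)+c|S|$ over all FQSTs (any finite $S$, any topology). *)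

theory Defs
  imports "HOL-Analysis.Analysis"
begin

type_synonym pt = "real^2"

text \<open>An FQST with sources Z and sink zb is given by a finite set S of Steiner
points, a successor map nx (the head of the unique out-edge of each non-sink node)
and a flow map fl (the flow on the out-edge of each non-sink node).
The tree property: every non-sink node reaches the sink by following out-edges.\<close>

definition in_nbrs :: "pt set \<Rightarrow> pt set \<Rightarrow> (pt \<Rightarrow> pt) \<Rightarrow> pt \<Rightarrow> pt set" where
  "in_nbrs Z S nx x = {y \<in> Z \<union> S. nx y = x}"

definition fqst :: "pt set \<Rightarrow> pt \<Rightarrow> pt set \<Rightarrow> (pt \<Rightarrow> pt) \<Rightarrow> (pt \<Rightarrow> real) \<Rightarrow> bool" where
  "fqst Z zb S nx fl \<longleftrightarrow>
     finite Z \<and> Z \<noteq> {} \<and> zb \<notin> Z \<and> finite S \<and> S \<inter> (Z \<union> {zb}) = {} \<and>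
     (\<forall>x \<in> Z \<union> S. nx x \<in> Z \<union> S \<union> {zb} \<and> fl x > 0 \<and> (\<exists>k. (nx ^^ k) x = zb)) \<and>
     (\<forall>z \<in> Z. fl z - (\<Sum>y\<in>in_nbrs Z S nx z. fl y) = 1) \<and>
     (\<forall>s \<in> S. fl s = (\<Sum>y\<in>in_nbrs Z S nx s. fl y)) \<and>
     (\<Sum>y\<in>in_nbrs Z S nx zb. fl y) = real (card Z)"

definition fq_cost :: "real \<Rightarrow> pt set \<Rightarrow> pt set \<Rightarrow> (pt \<Rightarrow> pt) \<Rightarrow> (pt \<Rightarrow> real) \<Rightarrow> real" where
  "fq_cost c Z S nx fl = (\<Sum>x\<in>Z \<union> S. fl x * (norm (x - nx x))\<^sup>2) + c * real (card S)"

definition mfqst :: "real \<Rightarrow> pt set \<Rightarrow> pt \<Rightarrow> pt set \<Rightarrow> (pt \<Rightarrow> pt) \<Rightarrow> (pt \<Rightarrow> real) \<Rightarrow> bool" where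
  "mfqst c Z zb S nx fl \<longleftrightarrow> fqst Z zb S nx fl \<and>
     (\<forall>S' nx' fl'. fqst Z zb S' nx' fl' \<longrightarrow> fq_cost c Z S nx fl \<le> fq_cost c Z S' nx' fl')"

definition adj :: "pt set \<Rightarrow> pt set \<Rightarrow> (pt \<Rightarrow> pt) \<Rightarrow> pt \<Rightarrow> pt \<Rightarrow> bool" where
  "adj Z S nx a b \<longleftrightarrow> (a \<in> Z \<union> S \<and> nx a = b) \<or> (b \<in> Z \<union> S \<and> nx b = a)"

definition degree :: "pt set \<Rightarrow> pt \<Rightarrow> pt set \<Rightarrow> (pt \<Rightarrow> pt) \<Rightarrow> pt \<Rightarrow> nat" where
  "degree Z zb S nx x = card {y \<in> Z \<union> S \<union> {zb}. adj Z S nx x y}"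

definition edge_flow :: "pt set \<Rightarrow> pt set \<Rightarrow> (pt \<Rightarrow> pt) \<Rightarrow> (pt \<Rightarrow> real) \<Rightarrow> pt \<Rightarrow> pt \<Rightarrow> real" where
  "edge_flow Z S nx fl a b = (if a \<in> Z \<union> S \<and> nx a = b then fl a else fl b)"

end

theory Submission
  imports Defs
begin


lemma reach_measure:
  assumes "\<forall>w\<in>D. g w \<in> D \<union> {z}" "\<forall>w\<in>D. g w \<noteq> z \<longrightarrow> m (g w) < (m w :: nat)"
  shows "w \<in> D \<Longrightarrow> \<exists>k. (g^^k) w = z"
proof (induction "m w" arbitrary: w rule: less_induct)
  case less
  show ?case
  proof (cases "g w = z")
    case True hence "(g^^1) w = z" by simp thus ?thesis by blast
  next
    case False
    hence "g w \<in> D" "m (g w) < m w" using assms less.prems by auto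
    then obtain k where "(g^^k) (g w) = z" using less.hyps by blast
    hence "(g^^(Suc k)) w = z" by (metis comp_apply funpow_Suc_right)
    thus ?thesis by blast
  qed
qed

lemma card2_eq: assumes "finite A" "card A = 2" "a \<in> A" "b \<in> A" "a \<noteq> b" shows "A = {a,b}"
proof -
  have "{a,b} \<subseteq> A" "card {a,b} = card A" using assms by auto
  thus ?thesis using card_subset_eq[OF assms(1)] by blast
qed

locale fql =
  fixes Z S :: "pt set" and zb :: pt and nx :: "pt \<Rightarrow> pt" and fl :: "pt \<Rightarrow> real"
  assumes fq: "fqst Z zb S nx fl"
begin

definition d where "d w = (LEAST k. (nx ^^ k) w = zb)"

lemma fq_facts: "finite Z" "finite S" "zb \<notin> Z \<union> S" "S \<inter> Z = {}" "Z \<noteq> {}"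
  "\<And>w. w \<in> Z \<union> S \<Longrightarrow> nx w \<in> Z \<union> S \<union> {zb}" "\<And>w. w \<in> Z\<union>S \<Longrightarrow> fl w > 0"
  "\<And>w. w \<in> Z\<union>S \<Longrightarrow> \<exists>k. (nx^^k) w = zb"
  using fq unfolding fqst_def by auto

lemma d_dec: assumes "w \<in> Z \<union> S" shows "d (nx w) < d w"
proof -
  obtain k where k: "(nx^^k) w = zb" using fq_facts(8)[OF assms] by blast
  have dw: "(nx ^^ d w) w = zb" unfolding d_def by (rule LeastI[of _ k], fact k)
  have "d w \<noteq> 0" using dw assms fq_facts(3) by (metis funpow_0)
  then obtain m where m: "d w = Suc m" by (cases "d w") auto
  have "(nx^^m) (nx w) = zb" using dw m by (metis comp_apply funpow_Suc_right)
  hence "d (nx w) \<le> m" unfolding d_def by (rule Least_le)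
  thus ?thesis using m by simp
qed

lemma no2cyc: "a \<in> Z\<union>S \<Longrightarrow> b \<in> Z\<union>S \<Longrightarrow> nx a = b \<Longrightarrow> nx b = a \<Longrightarrow> False"
  using d_dec[of a] d_dec[of b] by auto

lemma adj_sym: "adj Z S nx a b = adj Z S nx b a"
  unfolding adj_def by auto

lemma adj_in: "adj Z S nx a b \<Longrightarrow> a \<in> Z\<union>S\<union>{zb} \<and> b \<in> Z\<union>S\<union>{zb}"
  unfolding adj_def using fq_facts(6) by blast

lemma ef_sym: "adj Z S nx a b \<Longrightarrow> edge_flow Z S nx fl a b = edge_flow Z S nx fl b a"
  unfolding adj_def edge_flow_def using no2cyc by metis

end

locale pth = fql +
  fixes p :: nat and x :: "nat \<Rightarrow> pt" and f :: real
  assumes xinj: "inj_on x {..Suc p}"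
    and adjs: "\<forall>i\<le>p. adj Z S nx (x i) (x (Suc i))"
    and inS: "\<forall>i\<in>{1..p}. x i \<in> S \<and> degree Z zb S nx (x i) = 2"
    and efl: "\<forall>i\<le>p. edge_flow Z S nx fl (x i) (x (Suc i)) = f"
    and ok: "\<exists>k\<le>p. x k \<in> Z \<union> S \<and> nx (x k) = x (Suc k)"
begin

lemma xne: "i \<le> Suc p \<Longrightarrow> j \<le> Suc p \<Longrightarrow> i \<noteq> j \<Longrightarrow> x i \<noteq> x j"
  using xinj unfolding inj_on_def by auto

lemma backp: "j \<le> k \<Longrightarrow> k \<le> p \<Longrightarrow> x k \<in> Z\<union>S \<Longrightarrow> nx (x k) = x (Suc k) \<Longrightarrow>
   x (k - j) \<in> Z\<union>S \<and> nx (x (k-j)) = x (Suc (k-j))"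
proof (induction j)
  case 0 thus ?case by simp
next
  case (Suc j)
  define i where "i = k - j"
  have IH: "x i \<in> Z\<union>S" "nx (x i) = x (Suc i)" using Suc unfolding i_def by auto
  have i1: "i \<ge> 1" "i \<le> p" using Suc.prems unfolding i_def by auto
  have eq: "k - Suc j = i - 1" "Suc (i - 1) = i" using Suc.prems i1 unfolding i_def by auto
  have "i - 1 \<le> p" using i1 by auto
  hence "adj Z S nx (x (i - 1)) (x (Suc (i - 1)))" using adjs by blast
  hence a: "adj Z S nx (x (i - 1)) (x i)" using eq by simp
  have "x (Suc i) \<noteq> x (i - 1)" using xne i1 by auto
  thus ?case using a IH eq unfolding adj_def by auto
qed

lemma o0: "x 0 \<in> Z \<union> S \<and> nx (x 0) = x 1"
  using ok backp[of k k for k] by fastforce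

lemma nbrs: assumes "i \<in> {1..p}" shows "{y \<in> Z\<union>S\<union>{zb}. adj Z S nx (x i) y} = {x (i-1), x (Suc i)}"
proof (rule card2_eq)
  show "finite {y \<in> Z\<union>S\<union>{zb}. adj Z S nx (x i) y}" using fq_facts by auto
  show "card {y \<in> Z\<union>S\<union>{zb}. adj Z S nx (x i) y} = 2" using inS assms unfolding degree_def by auto
  have "i - 1 \<le> p" "Suc (i-1) = i" using assms by auto
  hence "adj Z S nx (x (i-1)) (x (Suc (i-1)))" using adjs by blast
  hence "adj Z S nx (x i) (x (i-1))" using assms adj_sym by auto
  thus "x (i-1) \<in> {y \<in> Z\<union>S\<union>{zb}. adj Z S nx (x i) y}" using adj_in by auto
  have "adj Z S nx (x i) (x (Suc i))" using adjs assms by auto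
  thus "x (Suc i) \<in> {y \<in> Z\<union>S\<union>{zb}. adj Z S nx (x i) y}" using adj_in by auto
  show "x (i-1) \<noteq> x (Suc i)" using xne assms by auto
qed

lemma fwd: "i \<le> p \<Longrightarrow> x i \<in> Z \<union> S \<and> nx (x i) = x (Suc i)"
proof (induction i)
  case 0 thus ?case using o0 by simp
next
  case (Suc i)
  hence IH: "x i \<in> Z\<union>S" "nx (x i) = x (Suc i)" by auto
  have iS: "Suc i \<in> {1..p}" using Suc.prems by auto
  hence xS: "x (Suc i) \<in> S" using inS by auto
  have "adj Z S nx (x (Suc i)) (nx (x (Suc i)))" unfolding adj_def using xS by auto
  moreover have "nx (x (Suc i)) \<in> Z\<union>S\<union>{zb}" using fq_facts(6) xS by auto
  ultimately have "nx (x (Suc i)) \<in> {x i, x (Suc (Suc i))}" using nbrs[OF iS] by auto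
  moreover have "nx (x (Suc i)) \<noteq> x i" using no2cyc IH xS by blast
  ultimately show ?case using xS by auto
qed

lemma flx: "i \<le> p \<Longrightarrow> fl (x i) = f"
  using efl fwd unfolding edge_flow_def by auto

lemma fpos: "f > 0" using flx[of 0] fwd[of 0] fq_facts(7) by auto

lemma xlast: "x (Suc p) \<in> Z \<union> S \<union> {zb}" using fwd[of p] fq_facts(6)[of "x p"] by auto

lemma inb: assumes "w \<in> Z\<union>S" "nx w = x i" "i \<in> {1..p}" shows "w = x (i - 1)"
proof -
  have "adj Z S nx (x i) w" using assms unfolding adj_def by auto
  moreover have "w \<in> Z\<union>S\<union>{zb}" using assms by auto
  ultimately have "w \<in> {x (i-1), x (Suc i)}" using nbrs[OF assms(3)] by blast
  moreover have "w \<noteq> x (Suc i)" using no2cyc[of "x i" w] fwd[of i] assms by auto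
  ultimately show ?thesis by auto
qed

lemma dchain: "j \<le> Suc p \<Longrightarrow> d (x j) + j \<le> d (x 0)"
proof (induction j)
  case 0 thus ?case by simp
next
  case (Suc j)
  hence "d (x (Suc j)) < d (x j)" using d_dec fwd[of j] by force
  thus ?case using Suc by simp
qed

end


locale rr = pth +
  fixes q :: nat and y :: "nat \<Rightarrow> pt"
  assumes y0: "y 0 = x 0" and yq: "y (Suc q) = x (Suc p)"
    and yout: "\<forall>j\<in>{1..q}. y j \<notin> Z \<union> S \<union> {zb}" and yinj: "inj_on y {1..q}"
begin

definition "XX = x ` {1..p}"
definition "YY = y ` {1..q}"
definition "Sn = (S - XX) \<union> YY"
definition "nxn w = (if w \<in> y ` {..q} then y (Suc (the_inv_into {..q} y w)) else nx w)"
definition "fln w = (if w \<in> YY then f else fl w)"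

lemma yinj2: "inj_on y {..Suc q}"
proof (rule inj_onI)
  fix i j assume a: "i \<in> {..Suc q}" "j \<in> {..Suc q}" "y i = y j"
  have e: "y 0 \<in> Z\<union>S\<union>{zb}" "y (Suc q) \<in> Z\<union>S\<union>{zb}" using y0 yq o0 xlast by auto
  have ne: "y 0 \<noteq> y (Suc q)" using y0 yq xne[of 0 "Suc p"] by auto
  have F: "\<And>k. k \<in> {..Suc q} \<Longrightarrow> k \<notin> {1..q} \<Longrightarrow> y k \<in> Z\<union>S\<union>{zb} \<and> (k = 0 \<or> k = Suc q)"
  proof -
    fix k assume "k \<in> {..Suc q}" "k \<notin> {1..q}"
    hence "k = 0 \<or> k = Suc q" by auto
    thus "y k \<in> Z\<union>S\<union>{zb} \<and> (k = 0 \<or> k = Suc q)" using e by auto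
  qed
  show "i = j"
  proof (cases "i \<in> {1..q}")
    case True
    have "j \<in> {1..q}"
    proof (rule ccontr)
      assume "j \<notin> {1..q}"
      hence "y j \<in> Z\<union>S\<union>{zb}" using F a(2) by blast
      moreover have "y i \<notin> Z\<union>S\<union>{zb}" using True yout by blast
      ultimately show False using a(3) by simp
    qed
    thus ?thesis using True a yinj unfolding inj_on_def by blast
  next
    case False
    have i: "y i \<in> Z\<union>S\<union>{zb}" "i = 0 \<or> i = Suc q" using F a(1) False by auto
    have "j \<notin> {1..q}"
    proof
      assume "j \<in> {1..q}"
      hence "y j \<notin> Z\<union>S\<union>{zb}" using yout by blast
      thus False using i a(3) by simp
    qed
    hence "j = 0 \<or> j = Suc q" using F a(2) by blast
    thus ?thesis using i a ne by auto
  qed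
qed

lemma yinj3: "inj_on y {..q}" using yinj2 by (rule inj_on_subset) auto

lemma nxn_y: "j \<le> q \<Longrightarrow> nxn (y j) = y (Suc j)"
  unfolding nxn_def using the_inv_into_f_f[OF yinj3] by auto

lemma yimg: "y ` {..q} = insert (x 0) YY"
proof -
  have "{..q} = insert 0 {1..q}" by auto
  thus ?thesis unfolding YY_def using y0 by auto
qed

lemma ximg: "x ` {..p} = insert (x 0) XX"
proof -
  have "{..p} = insert 0 {1..p}" by auto
  thus ?thesis unfolding XX_def by auto
qed

lemma YYout: "YY \<inter> (Z \<union> S \<union> {zb}) = {}" using yout unfolding YY_def by auto
lemma XXS: "XX \<subseteq> S" using inS unfolding XX_def by auto
lemma x0X: "x 0 \<notin> XX" unfolding XX_def
proof
  assume "x 0 \<in> x ` {1..p}"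
  then obtain i where "i \<in> {1..p}" "x 0 = x i" by blast
  thus False using xne[of 0 i] by auto
qed
lemma xlX: "x (Suc p) \<notin> XX" unfolding XX_def
proof
  assume "x (Suc p) \<in> x ` {1..p}"
  then obtain i where "i \<in> {1..p}" "x (Suc p) = x i" by blast
  thus False using xne[of "Suc p" i] by auto
qed
lemma cardX: "card XX = p" unfolding XX_def
  by (subst card_image) (auto intro: inj_on_subset[OF xinj])
lemma cardY: "card YY = q" unfolding YY_def
  by (subst card_image[OF yinj]) auto
lemma finX: "finite XX" unfolding XX_def by auto
lemma finY: "finite YY" unfolding YY_def by auto

lemma nxn_o: "w \<notin> y ` {..q} \<Longrightarrow> nxn w = nx w" unfolding nxn_def by auto

definition "RR z = {w \<in> (Z\<union>S) - XX - {x 0}. nx w = z}"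

lemma Nsplit: "Z \<union> S = ((Z\<union>S) - XX - {x 0}) \<union> x ` {..p}"
  using ximg XXS o0 by auto
lemma Nnsplit: "Z \<union> Sn = ((Z\<union>S) - XX - {x 0}) \<union> y ` {..q}"
  using yimg XXS o0 x0X fq_facts(4) unfolding Sn_def by auto

lemma in_old: "in_nbrs Z S nx z = RR z \<union> {w \<in> x ` {..p}. nx w = z}"
  unfolding in_nbrs_def RR_def using Nsplit by auto

lemma in_new: "in_nbrs Z Sn nxn z = RR z \<union> {w \<in> y ` {..q}. nxn w = z}"
proof -
  have "\<And>w. w \<in> (Z\<union>S) - XX - {x 0} \<Longrightarrow> nxn w = nx w"
    using nxn_o yimg YYout by auto
  thus ?thesis unfolding in_nbrs_def RR_def using Nnsplit by auto
qed

lemma RR_fin: "finite (RR z)" unfolding RR_def using fq_facts by auto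

lemma nxX: assumes "w \<in> Z \<union> S" "w \<notin> XX" "w \<noteq> x 0" shows "nx w \<notin> XX"
proof
  assume "nx w \<in> XX"
  then obtain i where i: "i \<in> {1..p}" "nx w = x i" unfolding XX_def by blast
  hence w: "w = x (i - 1)" using inb assms(1) by blast
  show False
  proof (cases "i = 1")
    case True thus False using w assms(3) by simp
  next
    case False
    hence "i - 1 \<in> {1..p}" using i by auto
    thus False using w assms(2) unfolding XX_def by blast
  qed
qed

lemma sum_eq: assumes "z \<notin> XX" "z \<notin> YY"
  shows "(\<Sum>w\<in>in_nbrs Z Sn nxn z. fln w) = (\<Sum>w\<in>in_nbrs Z S nx z. fl w)"
proof -
  have RRY: "RR z \<inter> YY = {}" unfolding RR_def using YYout by auto
  have s1: "(\<Sum>w\<in>RR z. fln w) = (\<Sum>w\<in>RR z. fl w)"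
    by (rule sum.cong) (use RRY in \<open>auto simp: fln_def\<close>)
  show ?thesis
  proof (cases "z = x (Suc p)")
    case True
    have o: "{w \<in> x ` {..p}. nx w = z} = {x p}"
    proof -
      have "nx (x i) = z \<longleftrightarrow> i = p" if "i \<le> p" for i
        using that fwd[of i] True xne[of "Suc i" "Suc p"] by auto
      thus ?thesis by auto
    qed
    have n: "{w \<in> y ` {..q}. nxn w = z} = {y q}"
    proof -
      have "nxn (y i) = z \<longleftrightarrow> i = q" if "i \<le> q" for i
        using that nxn_y[of i] True yq inj_onD[OF yinj2, of "Suc i" "Suc q"] by auto
      thus ?thesis by auto
    qed
    have xpR: "x p \<notin> RR z" unfolding RR_def XX_def by (cases p) auto
    have yqR: "y q \<notin> RR z"
    proof (cases q)
      case 0 thus ?thesis using y0 unfolding RR_def by auto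
    next
      case (Suc n) hence "y q \<in> YY" unfolding YY_def by auto
      thus ?thesis using YYout unfolding RR_def by auto
    qed
    have fyq: "fln (y q) = f"
      using y0 flx[of 0] x0X unfolding fln_def YY_def by (cases q) auto
    show ?thesis unfolding in_old in_new o n using xpR yqR RR_fin s1 fyq flx[of p] by simp
  next
    case False
    have "\<And>i. i \<le> p \<Longrightarrow> nx (x i) \<noteq> z"
    proof -
      fix i assume i: "i \<le> p"
      show "nx (x i) \<noteq> z"
      proof (cases "Suc i \<le> p")
        case True hence "x (Suc i) \<in> XX" unfolding XX_def by auto
        thus ?thesis using fwd[OF i] assms(1) by auto
      next
        case False hence "i = p" using i by auto
        thus ?thesis using fwd[OF i] \<open>z \<noteq> x (Suc p)\<close> by auto
      qed
    qed
    hence o: "{w \<in> x ` {..p}. nx w = z} = {}" by auto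
    have "\<And>i. i \<le> q \<Longrightarrow> nxn (y i) \<noteq> z"
    proof -
      fix i assume i: "i \<le> q"
      show "nxn (y i) \<noteq> z"
      proof (cases "Suc i \<le> q")
        case True hence "y (Suc i) \<in> YY" unfolding YY_def by auto
        thus ?thesis using nxn_y[OF i] assms(2) by auto
      next
        case False hence "i = q" using i by auto
        thus ?thesis using nxn_y[OF i] yq \<open>z \<noteq> x (Suc p)\<close> by auto
      qed
    qed
    hence n: "{w \<in> y ` {..q}. nxn w = z} = {}" by auto
    show ?thesis unfolding in_old in_new o n using s1 by simp
  qed
qed

end


context rr begin

lemma y_in_YY: "j \<in> {1..q} \<Longrightarrow> y j \<in> YY" unfolding YY_def by auto

lemma YY_cases: "w \<in> YY \<Longrightarrow> \<exists>j\<in>{1..q}. w = y j" unfolding YY_def by auto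

lemma dom_new: assumes "w \<in> Z \<union> Sn" shows "nxn w \<in> Z \<union> Sn \<union> {zb}"
proof -
  have sub: "(Z \<union> S) - XX \<subseteq> Z \<union> Sn" unfolding Sn_def by auto
  have YS: "YY \<subseteq> Z \<union> Sn" unfolding Sn_def by auto
  show ?thesis
  proof (cases "w \<in> y ` {..q}")
    case True
    then obtain j where j: "j \<le> q" "w = y j" by auto
    hence e: "nxn w = y (Suc j)" using nxn_y by simp
    show ?thesis
    proof (cases "Suc j \<le> q")
      case True thus ?thesis using e y_in_YY[of "Suc j"] YS by auto
    next
      case False hence "Suc j = Suc q" using j by auto
      hence "nxn w = x (Suc p)" using e yq by simp
      thus ?thesis using xlast xlX sub by auto
    qed
  next
    case False
    hence w: "w \<in> (Z\<union>S) - XX - {x 0}" using assms Nnsplit by auto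
    hence "nxn w = nx w" using nxn_o False by simp
    moreover have "nx w \<in> Z \<union> S \<union> {zb}" using fq_facts(6) w by auto
    moreover have "nx w \<notin> XX" using nxX w by auto
    ultimately show ?thesis using sub by auto
  qed
qed

lemma fln_pos: assumes "w \<in> Z \<union> Sn" shows "fln w > 0"
proof (cases "w \<in> YY")
  case True thus ?thesis using fpos unfolding fln_def by simp
next
  case False hence "w \<in> Z \<union> S" using assms unfolding Sn_def by auto
  thus ?thesis using False fq_facts(7) unfolding fln_def by simp
qed

definition "mm w = (if w \<in> YY then d (x (Suc p)) + q + 1 - the_inv_into {1..q} y w
    else d w + (if d (x (Suc p)) < d w then q else 0))"

lemma mm_y: "j \<in> {1..q} \<Longrightarrow> mm (y j) = d (x (Suc p)) + q + 1 - j"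
  unfolding mm_def using the_inv_into_f_f[OF yinj] y_in_YY by simp

lemma dvx0: "d (x (Suc p)) + Suc p \<le> d (x 0)" using dchain[of "Suc p"] by simp

lemma reach_new: assumes "w \<in> Z \<union> Sn" shows "\<exists>k. (nxn^^k) w = zb"
proof (rule reach_measure[of "Z \<union> Sn" nxn zb mm])
  show "\<forall>w\<in>Z \<union> Sn. nxn w \<in> Z \<union> Sn \<union> {zb}" using dom_new by blast
  show "w \<in> Z \<union> Sn" by fact
  show "\<forall>w\<in>Z \<union> Sn. nxn w \<noteq> zb \<longrightarrow> mm (nxn w) < mm w"
  proof (intro ballI impI)
    fix w assume w: "w \<in> Z \<union> Sn" "nxn w \<noteq> zb"
    show "mm (nxn w) < mm w"
    proof (cases "w \<in> y ` {..q}")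
      case True
      then obtain j where j: "j \<le> q" "w = y j" by auto
      hence e: "nxn w = y (Suc j)" using nxn_y by simp
      have mw: "mm w \<ge> d (x (Suc p)) + q + 1 - j"
      proof (cases "j = 0")
        case True
        hence "w = x 0" "x 0 \<notin> YY" using j y0 YYout o0 by auto
        thus ?thesis unfolding mm_def using dvx0 True by auto
      next
        case False thus ?thesis using mm_y[of j] j by auto
      qed
      show ?thesis
      proof (cases "Suc j \<le> q")
        case True thus ?thesis using e mm_y[of "Suc j"] mw j by auto
      next
        case False hence "Suc j = Suc q" using j by auto
        hence "nxn w = x (Suc p)" using e yq by simp
        moreover have "x (Suc p) \<notin> YY" using xlast YYout by auto
        ultimately show ?thesis using mw \<open>Suc j = Suc q\<close> unfolding mm_def by auto
      qed
    next
      case False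
      hence ww: "w \<in> (Z\<union>S) - XX - {x 0}" using w Nnsplit by auto
      hence e: "nxn w = nx w" using nxn_o False by simp
      have n1: "nx w \<notin> YY" using fq_facts(6) ww YYout by auto
      have n2: "w \<notin> YY" using ww YYout by auto
      have "d (nx w) < d w" using d_dec ww by auto
      thus ?thesis using e n1 n2 unfolding mm_def by auto
    qed
  qed
qed

lemma fqst_new: "fqst Z zb Sn nxn fln"
proof -
  have a: "S \<inter> Z = {}" "zb \<notin> Z \<union> S" using fq_facts by auto
  have zbX: "zb \<notin> XX" "zb \<notin> YY" using XXS a YYout by auto
  have ZX: "z \<notin> XX \<and> z \<notin> YY" if "z \<in> Z" for z using that XXS a YYout by auto
  have SX: "s \<notin> YY" if "s \<in> S" for s using that YYout by auto
  have c1: "\<forall>z\<in>Z. fln z - (\<Sum>y\<in>in_nbrs Z Sn nxn z. fln y) = 1"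
  proof
    fix z assume z: "z \<in> Z"
    have "fln z = fl z" using ZX[OF z] unfolding fln_def by simp
    thus "fln z - (\<Sum>y\<in>in_nbrs Z Sn nxn z. fln y) = 1"
      using sum_eq ZX[OF z] fq z unfolding fqst_def by auto
  qed
  have c2: "\<forall>s\<in>Sn. fln s = (\<Sum>y\<in>in_nbrs Z Sn nxn s. fln y)"
  proof
    fix s assume s: "s \<in> Sn"
    show "fln s = (\<Sum>y\<in>in_nbrs Z Sn nxn s. fln y)"
    proof (cases "s \<in> YY")
      case False
      hence s2: "s \<in> S" "s \<notin> XX" using s unfolding Sn_def by auto
      have "fln s = fl s" using False unfolding fln_def by simp
      thus ?thesis using sum_eq s2 False fq unfolding fqst_def by auto
    next
      case True
      then obtain j where j: "j \<in> {1..q}" "s = y j" using YY_cases by blast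
      have R: "RR s = {}" unfolding RR_def using fq_facts(6) True YYout by auto
      have "nxn (y i) = s \<longleftrightarrow> i = j - 1" if "i \<le> q" for i
        using that nxn_y[of i] j inj_onD[OF yinj2, of "Suc i" j] by auto
      hence P: "{w \<in> y ` {..q}. nxn w = s} = {y (j - 1)}" using j by auto
      have "fln (y (j - 1)) = f"
      proof (cases "j = 1")
        case True thus ?thesis using y0 flx[of 0] x0X YYout o0 unfolding fln_def by auto
      next
        case False hence "j - 1 \<in> {1..q}" using j by auto
        thus ?thesis using y_in_YY[of "j - 1"] unfolding fln_def by auto
      qed
      moreover have "fln s = f" using True unfolding fln_def by simp
      ultimately show ?thesis unfolding in_new R P by simp
    qed
  qed
  have c3: "(\<Sum>y\<in>in_nbrs Z Sn nxn zb. fln y) = real (card Z)"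
    using sum_eq[OF zbX] fq unfolding fqst_def by auto
  show ?thesis unfolding fqst_def
    using fq_facts(1,2,5) a finY YYout c1 c2 c3 dom_new fln_pos reach_new
    unfolding Sn_def by auto
qed

definition "AA = (\<Sum>w\<in>(Z\<union>S) - XX - {x 0}. fl w * (norm (w - nx w))\<^sup>2)"

lemma cost_old: "fq_cost c Z S nx fl = AA + f * (\<Sum>i\<le>p. (norm (x i - x (Suc i)))\<^sup>2) + c * real (card S)"
proof -
  have fin: "finite ((Z\<union>S) - XX - {x 0})" "finite (x ` {..p})" using fq_facts by auto
  have dj: "((Z\<union>S) - XX - {x 0}) \<inter> x ` {..p} = {}" using ximg by auto
  have inj: "inj_on x {..p}" using xinj by (rule inj_on_subset) auto
  have "(\<Sum>w\<in>Z\<union>S. fl w * (norm (w - nx w))\<^sup>2) = AA + (\<Sum>w\<in>x ` {..p}. fl w * (norm (w - nx w))\<^sup>2)"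
    unfolding AA_def by (subst Nsplit, rule sum.union_disjoint[OF fin dj])
  also have "(\<Sum>w\<in>x ` {..p}. fl w * (norm (w - nx w))\<^sup>2) = (\<Sum>i\<le>p. fl (x i) * (norm (x i - nx (x i)))\<^sup>2)"
    by (rule sum.reindex[OF inj, unfolded comp_def])
  also have "\<dots> = (\<Sum>i\<le>p. f * (norm (x i - x (Suc i)))\<^sup>2)"
    by (rule sum.cong) (auto simp: flx fwd)
  finally show ?thesis unfolding fq_cost_def by (simp add: sum_distrib_left)
qed

lemma cost_new: "fq_cost c Z Sn nxn fln = AA + f * (\<Sum>j\<le>q. (norm (y j - y (Suc j)))\<^sup>2) + c * (real (card S) - p + q)"
proof -
  have fin: "finite ((Z\<union>S) - XX - {x 0})" "finite (y ` {..q})" using fq_facts by auto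
  have dj: "((Z\<union>S) - XX - {x 0}) \<inter> y ` {..q} = {}" using yimg YYout by auto
  have "(\<Sum>w\<in>Z\<union>Sn. fln w * (norm (w - nxn w))\<^sup>2) = (\<Sum>w\<in>(Z\<union>S) - XX - {x 0}. fln w * (norm (w - nxn w))\<^sup>2) + (\<Sum>w\<in>y ` {..q}. fln w * (norm (w - nxn w))\<^sup>2)"
    by (subst Nnsplit, rule sum.union_disjoint[OF fin dj])
  also have "(\<Sum>w\<in>(Z\<union>S) - XX - {x 0}. fln w * (norm (w - nxn w))\<^sup>2) = AA"
    unfolding AA_def
  proof (rule sum.cong)
    fix w assume w: "w \<in> (Z\<union>S) - XX - {x 0}"
    hence "w \<notin> YY" "w \<notin> y ` {..q}" using YYout yimg by auto
    thus "fln w * (norm (w - nxn w))\<^sup>2 = fl w * (norm (w - nx w))\<^sup>2"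
      using nxn_o unfolding fln_def by simp
  qed simp
  also have "(\<Sum>w\<in>y ` {..q}. fln w * (norm (w - nxn w))\<^sup>2) = (\<Sum>j\<le>q. fln (y j) * (norm (y j - nxn (y j)))\<^sup>2)"
    by (rule sum.reindex[OF yinj3, unfolded comp_def])
  also have "\<dots> = (\<Sum>j\<le>q. f * (norm (y j - y (Suc j)))\<^sup>2)"
  proof (rule sum.cong)
    fix j assume j: "j \<in> {..q}"
    have "fln (y j) = f"
    proof (cases "j = 0")
      case True thus ?thesis using y0 flx[of 0] x0X YYout o0 unfolding fln_def by auto
    next
      case False thus ?thesis using y_in_YY[of j] j unfolding fln_def by auto
    qed
    thus "fln (y j) * (norm (y j - nxn (y j)))\<^sup>2 = f * (norm (y j - y (Suc j)))\<^sup>2"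
      using nxn_y j by simp
  qed simp
  finally have s: "(\<Sum>w\<in>Z\<union>Sn. fln w * (norm (w - nxn w))\<^sup>2) = AA + f * (\<Sum>j\<le>q. (norm (y j - y (Suc j)))\<^sup>2)"
    by (simp add: sum_distrib_left)
  have "card Sn = card (S - XX) + card YY" unfolding Sn_def
    using fq_facts(2) finY YYout by (intro card_Un_disjoint) auto
  moreover have "card (S - XX) = card S - p" using card_Diff_subset[OF finX XXS] cardX by simp
  moreover have "p \<le> card S" using card_mono[OF fq_facts(2) XXS] cardX by simp
  ultimately have "real (card Sn) = real (card S) - p + q" using cardY by simp
  thus ?thesis unfolding fq_cost_def s by simp
qed

lemma ineq: assumes "mfqst c Z zb S nx fl"
  shows "f * (\<Sum>i\<le>p. (norm (x i - x (Suc i)))\<^sup>2) + c * p \<le> f * (\<Sum>j\<le>q. (norm (y j - y (Suc j)))\<^sup>2) + c * q"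
proof -
  have "fq_cost c Z S nx fl \<le> fq_cost c Z Sn nxn fln" using assms fqst_new unfolding mfqst_def by blast
  thus ?thesis unfolding cost_old cost_new by (simp add: algebra_simps)
qed

end


lemma tri: fixes x :: "nat \<Rightarrow> 'a::real_normed_vector"
  shows "norm (x 0 - x (Suc n)) \<le> (\<Sum>i\<le>n. norm (x i - x (Suc i)))"
proof (induction n)
  case 0 thus ?case by simp
next
  case (Suc n)
  have "norm (x 0 - x (Suc (Suc n))) \<le> norm (x 0 - x (Suc n)) + norm (x (Suc n) - x (Suc (Suc n)))"
    using norm_triangle_ineq[of "x 0 - x (Suc n)" "x (Suc n) - x (Suc (Suc n))"] by simp
  thus ?case using Suc by simp
qed

lemma lowP: fixes x :: "nat \<Rightarrow> 'a::real_normed_vector"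
  shows "(norm (x 0 - x (Suc n)))\<^sup>2 \<le> (real n + 1) * (\<Sum>i\<le>n. (norm (x i - x (Suc i)))\<^sup>2)"
proof -
  have "(norm (x 0 - x (Suc n)))\<^sup>2 \<le> (\<Sum>i\<le>n. norm (x i - x (Suc i)))\<^sup>2"
    using tri[of x n] by (intro power_mono) auto
  also have "\<dots> \<le> (\<Sum>i\<le>n. (norm (x i - x (Suc i)))\<^sup>2) * card {..n}"
    by (rule sum_squared_le_sum_of_squares)
  finally show ?thesis by (simp add: mult.commute add.commute)
qed

lemma fin_one: fixes u w z :: "'a::real_normed_vector"
  assumes "w \<noteq> 0" shows "finite {dl::real. u + (a + dl) *\<^sub>R w = z}"
proof (cases "\<exists>d0. u + (a + d0) *\<^sub>R w = z")
  case True
  then obtain d0 where d0: "u + (a + d0) *\<^sub>R w = z" by blast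
  have "{dl::real. u + (a + dl) *\<^sub>R w = z} \<subseteq> {d0}"
  proof
    fix dl assume "dl \<in> {dl::real. u + (a + dl) *\<^sub>R w = z}"
    hence "u + (a + dl) *\<^sub>R w = u + (a + d0) *\<^sub>R w" using d0 by simp
    hence "(a + dl) *\<^sub>R w = (a + d0) *\<^sub>R w" by (rule add_left_imp_eq)
    hence "a + dl = a + d0" using assms by (meson scaleR_cancel_right)
    thus "dl \<in> {d0}" by simp
  qed
  thus ?thesis using finite_subset by blast
next
  case False thus ?thesis by simp
qed

context pth begin

lemma step_q: assumes mf: "mfqst c Z zb S nx fl" and e: "\<epsilon> > 0"
  shows "f * (\<Sum>i\<le>p. (norm (x i - x (Suc i)))\<^sup>2) + c * p
     \<le> f * (norm (x 0 - x (Suc p)))\<^sup>2 / (real q + 1) + c * q + \<epsilon>"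
proof -
  define u where "u = x 0"
  define w where "w = x (Suc p) - x 0"
  define D where "D = (norm (x 0 - x (Suc p)))\<^sup>2"
  have wne: "w \<noteq> 0" unfolding w_def using xne[of "Suc p" 0] by auto
  have Dw: "D = (norm w)\<^sup>2" unfolding D_def w_def by (simp add: norm_minus_commute)
  have Dpos: "D > 0" using wne Dw by simp
  have fp: "f > 0" by (rule fpos)
  define eta where "eta = min (1 / (real q + 1)) (\<epsilon> / (3 * D * f + 1))"
  have "3 * D * f + 1 > 0" using Dpos fp by (simp add: add_pos_pos)
  hence etap: "eta > 0" unfolding eta_def using e by (auto intro!: divide_pos_pos)
  define F where "F = Z \<union> S \<union> {zb}"
  have finF: "finite F" unfolding F_def using fq_facts by auto
  define B where "B = (\<Union>j\<in>{1..q}. \<Union>z\<in>F. {dl::real. u + (real j / (real q + 1) + dl) *\<^sub>R w = z})"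
  have finB: "finite B" unfolding B_def using finF fin_one[OF wne] by auto
  have "infinite ({0<..<eta} - B)" using Diff_infinite_finite[OF finB] etap by auto
  then obtain dl where dl: "dl \<in> {0<..<eta}" "dl \<notin> B" using infinite_imp_nonempty by blast
  have dl0: "dl > 0" and dl1: "dl \<le> 1 / (real q + 1)" and dl2: "dl < \<epsilon> / (3 * D * f + 1)"
    using dl unfolding eta_def by auto
  define s where "s j = (if j = 0 then 0 else if j = Suc q then 1 else real j / (real q + 1) + dl)" for j
  define y where "y j = u + s j *\<^sub>R w" for j
  have sm: "s j = real j / (real q + 1) + dl" if "j \<in> {1..q}" for j
    using that unfolding s_def by auto
  have R: "rr Z S zb nx fl p x f q y"
  proof (rule rr.intro[OF pth_axioms rr_axioms.intro])
    show "y 0 = x 0" unfolding y_def s_def u_def by simp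
    show "y (Suc q) = x (Suc p)" unfolding y_def s_def u_def w_def by simp
    show "\<forall>j\<in>{1..q}. y j \<notin> Z \<union> S \<union> {zb}"
    proof
      fix j assume j: "j \<in> {1..q}"
      show "y j \<notin> Z \<union> S \<union> {zb}"
      proof
        assume "y j \<in> Z \<union> S \<union> {zb}"
        hence "dl \<in> B" unfolding B_def F_def y_def using sm[OF j] j by auto
        thus False using dl by simp
      qed
    qed
    show "inj_on y {1..q}"
    proof (rule inj_onI)
      fix i j assume ij: "i \<in> {1..q}" "j \<in> {1..q}" "y i = y j"
      hence "s i *\<^sub>R w = s j *\<^sub>R w" unfolding y_def by simp
      hence "s i = s j" using wne by (simp add: scaleR_cancel_right)
      hence "real i / (real q + 1) = real j / (real q + 1)" using sm ij by simp
      thus "i = j" by (simp add: divide_cancel_right)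
    qed
  qed
  have I: "f * (\<Sum>i\<le>p. (norm (x i - x (Suc i)))\<^sup>2) + c * p \<le> f * (\<Sum>j\<le>q. (norm (y j - y (Suc j)))\<^sup>2) + c * q"
    using rr.ineq[OF R mf] .
  have diff: "\<bar>s (Suc j) - s j - 1 / (real q + 1)\<bar> \<le> dl" if jq: "j \<le> q" for j
  proof -
    have qp: "real q + 1 > 0" by simp
    consider "j = 0" "q = 0" | "j = 0" "q > 0" | "j > 0" "j = q" | "j > 0" "j < q" using jq by (metis gr0I le_neq_implies_less)
    thus ?thesis
    proof cases
      case 1 thus ?thesis unfolding s_def using dl0 by simp
    next
      case 2 thus ?thesis unfolding s_def using dl0 by simp
    next
      case 3
      have "s (Suc j) - s j - 1 / (real q + 1) = 1 - real q / (real q + 1) - 1 / (real q + 1) - dl"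
        unfolding s_def using 3 by simp
      also have "1 - real q / (real q + 1) - 1 / (real q + 1) = 0" using qp by (simp add: field_simps)
      finally show ?thesis using dl0 by simp
    next
      case 4
      have "s (Suc j) - s j - 1 / (real q + 1) = real (Suc j) / (real q + 1) - real j / (real q + 1) - 1 / (real q + 1)"
        unfolding s_def using 4 by simp
      also have "\<dots> = 0" using qp by (simp add: field_simps)
      finally show ?thesis using dl0 by simp
    qed
  qed
  have trm: "(norm (y j - y (Suc j)))\<^sup>2 \<le> (1 / (real q + 1) + dl)\<^sup>2 * D" if "j \<le> q" for j
  proof -
    have "y j - y (Suc j) = (s j - s (Suc j)) *\<^sub>R w" unfolding y_def by (simp add: scaleR_diff_left)
    hence "(norm (y j - y (Suc j)))\<^sup>2 = (s (Suc j) - s j)\<^sup>2 * D"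
      unfolding Dw by (simp add: power_mult_distrib power2_abs abs_minus_commute power2_commute)
    moreover have "\<bar>s (Suc j) - s j\<bar> \<le> 1 / (real q + 1) + dl" using diff[OF that] divide_nonneg_nonneg[of 1 "real q + 1"] unfolding abs_le_iff by linarith
    hence "(s (Suc j) - s j)\<^sup>2 \<le> (1 / (real q + 1) + dl)\<^sup>2"
      by (metis abs_ge_zero power2_abs power_mono)
    ultimately show ?thesis using Dpos by (simp add: mult_right_mono)
  qed
  have Q: "(\<Sum>j\<le>q. (norm (y j - y (Suc j)))\<^sup>2) \<le> (real q + 1) * ((1 / (real q + 1) + dl)\<^sup>2 * D)"
    using sum_mono[of "{..q}" "\<lambda>j. (norm (y j - y (Suc j)))\<^sup>2" "\<lambda>j. (1 / (real q + 1) + dl)\<^sup>2 * D"] trm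
    by (simp add: add.commute)
  have alg: "(real q + 1) * (1 / (real q + 1) + dl)\<^sup>2 = 1 / (real q + 1) + 2 * dl + (real q + 1) * dl\<^sup>2"
  proof -
    define r where "r = real q + 1"
    have r: "r > 0" unfolding r_def by simp
    have "r * (1 / r + dl)\<^sup>2 = r * (1/r) * (1/r) + 2 * dl * (r * (1/r)) + r * dl\<^sup>2"
      by (simp add: power2_eq_square algebra_simps)
    also have "\<dots> = 1 / r + 2 * dl + r * dl\<^sup>2" using r by simp
    finally show ?thesis unfolding r_def .
  qed
  have "(real q + 1) * dl\<^sup>2 \<le> dl"
  proof -
    have "(real q + 1) * dl \<le> 1" using dl1 by (simp add: field_simps)
    hence "((real q + 1) * dl) * dl \<le> 1 * dl" using dl0 by (intro mult_right_mono) auto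
    thus ?thesis by (simp add: power2_eq_square mult.assoc)
  qed
  hence K: "(real q + 1) * (1 / (real q + 1) + dl)\<^sup>2 \<le> 1 / (real q + 1) + 3 * dl" using alg by simp
  have "(real q + 1) * ((1 / (real q + 1) + dl)\<^sup>2 * D) = ((real q + 1) * (1 / (real q + 1) + dl)\<^sup>2) * D"
    by (simp add: mult.assoc)
  also have "\<dots> \<le> (1 / (real q + 1) + 3 * dl) * D" using K Dpos by (intro mult_right_mono) auto
  also have "\<dots> = D / (real q + 1) + 3 * dl * D" by (simp add: field_simps)
  finally have Q2: "(\<Sum>j\<le>q. (norm (y j - y (Suc j)))\<^sup>2) \<le> D / (real q + 1) + 3 * dl * D"
    using Q by linarith
  have "f * (\<Sum>j\<le>q. (norm (y j - y (Suc j)))\<^sup>2) \<le> f * D / (real q + 1) + 3 * dl * D * f"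
    using mult_left_mono[OF Q2, of f] fp by (simp add: algebra_simps)
  moreover have "3 * dl * D * f < \<epsilon>"
  proof -
    have "3 * D * f + 1 > 0" using Dpos fp by (simp add: add_pos_pos)
    hence "dl * (3 * D * f + 1) < \<epsilon>" using dl2 by (simp add: pos_less_divide_eq)
    thus ?thesis using dl0 by (simp add: algebra_simps)
  qed
  ultimately show ?thesis using I unfolding D_def by simp
qed

lemma step_q2: assumes mf: "mfqst c Z zb S nx fl"
  shows "f * (\<Sum>i\<le>p. (norm (x i - x (Suc i)))\<^sup>2) + c * p
     \<le> f * (norm (x 0 - x (Suc p)))\<^sup>2 / (real q + 1) + c * q"
  by (rule field_le_epsilon) (use step_q[OF mf] in auto)

lemma final: assumes mf: "mfqst c Z zb S nx fl" and c: "c > 0"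
  shows "real p * (real p + 1) \<le> f * (norm (x 0 - x (Suc p)))\<^sup>2 / c
       \<and> f * (norm (x 0 - x (Suc p)))\<^sup>2 / c \<le> (real p + 2) * (real p + 1)"
proof -
  define D where "D = (norm (x 0 - x (Suc p)))\<^sup>2"
  define P where "P = (\<Sum>i\<le>p. (norm (x i - x (Suc i)))\<^sup>2)"
  have fp: "f > 0" by (rule fpos)
  have D0: "D \<ge> 0" unfolding D_def by simp
  have L: "D \<le> (real p + 1) * P" unfolding D_def P_def by (rule lowP)
  have H: "\<And>q. f * P + c * p \<le> f * D / (real q + 1) + c * q"
    unfolding D_def P_def using step_q2[OF mf] by blast
  have LP: "f * D / (real p + 1) \<le> f * P"
  proof -
    have "D / (real p + 1) \<le> P" using L by (simp add: field_simps)
    thus ?thesis using fp by (simp add: mult_left_mono divide_simps)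
  qed
  have up: "f * D / (real p + 1) + c * p \<le> f * D / (real p + 2) + c * (real p + 1)"
    using H[of "Suc p"] LP by (simp add: add.commute)
  hence "f * D * (1 / (real p + 1) - 1 / (real p + 2)) \<le> c"
    by (simp add: algebra_simps)
  moreover have "1 / (real p + 1) - 1 / (real p + 2) = 1 / ((real p + 1) * (real p + 2))"
    by (simp add: field_simps)
  ultimately have "f * D / ((real p + 1) * (real p + 2)) \<le> c" by simp
  moreover have "(real p + 1) * (real p + 2) > 0" by simp
  ultimately have "f * D \<le> c * ((real p + 1) * (real p + 2))" by (simp add: pos_divide_le_eq)
  hence U: "f * D \<le> c * ((real p + 2) * (real p + 1))" by (simp add: mult.commute)
  have Lo: "c * (real p * (real p + 1)) \<le> f * D"
  proof (cases p)
    case 0 thus ?thesis using fp D0 by simp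
  next
    case (Suc m)
    have "f * D / (real p + 1) + c * p \<le> f * D / (real m + 1) + c * m"
      using H[of m] LP by simp
    hence "c \<le> f * D * (1 / real p - 1 / (real p + 1))" using Suc by (simp add: algebra_simps)
    moreover have "1 / real p - 1 / (real p + 1) = 1 / (real p * (real p + 1))" using Suc by (simp add: field_simps)
    ultimately have "c \<le> f * D / (real p * (real p + 1))" by simp
    moreover have "real p * (real p + 1) > 0" using Suc by simp
    ultimately have "c * (real p * (real p + 1)) \<le> f * D" by (simp add: pos_le_divide_eq)
    thus ?thesis .
  qed
  show ?thesis unfolding D_def[symmetric] using U Lo c by (simp add: field_simps)
qed

end


theorem mainTheorem13:
  fixes c :: real and Z S :: "pt set" and zb :: pt and nx :: "pt \<Rightarrow> pt"
    and fl :: "pt \<Rightarrow> real" and xs :: "pt list" and p :: nat and f :: real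
  assumes "c > 0"
    and "mfqst c Z zb S nx fl"
    and "length xs = p + 2"
    and "distinct xs"
    and "\<forall>i < p + 1. adj Z S nx (xs ! i) (xs ! (i + 1))"
    and "\<forall>i \<in> {1..p}. xs ! i \<in> S \<and> degree Z zb S nx (xs ! i) = 2"
    and "\<forall>i < p + 1. edge_flow Z S nx fl (xs ! i) (xs ! (i + 1)) = f"
  shows "real p * (real p + 1) \<le> f * (norm (xs ! 0 - xs ! (p + 1)))\<^sup>2 / c
       \<and> f * (norm (xs ! 0 - xs ! (p + 1)))\<^sup>2 / c \<le> (real p + 2) * (real p + 1)"
proof -
  have F: "fql Z S zb nx fl" using assms(2) unfolding mfqst_def by (intro fql.intro) blast
  have adj0: "adj Z S nx (xs ! 0) (xs ! 1)" using assms(5) by auto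
  have inj: "inj_on (nth xs) {..Suc p}" using assms(3,4) by (intro inj_on_nth) auto
  show ?thesis
  proof (cases "xs ! 0 \<in> Z \<union> S \<and> nx (xs ! 0) = xs ! 1")
    case True
    have P: "pth Z S zb nx fl p (nth xs) f"
    proof (rule pth.intro[OF F pth_axioms.intro])
      show "inj_on (nth xs) {..Suc p}" by (fact inj)
      show "\<forall>i\<le>p. adj Z S nx (xs ! i) (xs ! Suc i)" using assms(5) by auto
      show "\<forall>i\<in>{1..p}. xs ! i \<in> S \<and> degree Z zb S nx (xs ! i) = 2" using assms(6) by auto
      show "\<forall>i\<le>p. edge_flow Z S nx fl (xs ! i) (xs ! Suc i) = f" using assms(7) by auto
      show "\<exists>k\<le>p. xs ! k \<in> Z \<union> S \<and> nx (xs ! k) = xs ! Suc k" using True by auto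
    qed
    show ?thesis using pth.final[OF P assms(2,1)] by simp
  next
    case False
    hence B: "xs ! 1 \<in> Z \<union> S" "nx (xs ! 1) = xs ! 0" using adj0 unfolding adj_def by auto
    define x where "x i = xs ! (Suc p - i)" for i
    have P: "pth Z S zb nx fl p x f"
    proof (rule pth.intro[OF F pth_axioms.intro])
      show "inj_on x {..Suc p}"
      proof (rule inj_onI)
        fix i j assume "i \<in> {..Suc p}" "j \<in> {..Suc p}" "x i = x j"
        hence "Suc p - i = Suc p - j" using inj unfolding x_def inj_on_def by auto
        thus "i = j" using \<open>i \<in> {..Suc p}\<close> \<open>j \<in> {..Suc p}\<close> by auto
      qed
      show "\<forall>i\<le>p. adj Z S nx (x i) (x (Suc i))"
      proof (intro allI impI)
        fix i assume i: "i \<le> p"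
        have "adj Z S nx (xs ! (p - i)) (xs ! (p - i + 1))" using assms(5) i by auto
        moreover have "Suc p - i = p - i + 1" "Suc p - Suc i = p - i" using i by auto
        ultimately show "adj Z S nx (x i) (x (Suc i))" unfolding x_def
          using fql.adj_sym[OF F] by metis
      qed
      show "\<forall>i\<in>{1..p}. x i \<in> S \<and> degree Z zb S nx (x i) = 2"
      proof
        fix i assume i: "i \<in> {1..p}"
        hence "Suc p - i \<in> {1..p}" by auto
        thus "x i \<in> S \<and> degree Z zb S nx (x i) = 2" using assms(6) unfolding x_def by blast
      qed
      show "\<forall>i\<le>p. edge_flow Z S nx fl (x i) (x (Suc i)) = f"
      proof (intro allI impI)
        fix i assume i: "i \<le> p"
        have a: "adj Z S nx (xs ! (p - i)) (xs ! (p - i + 1))" using assms(5) i by auto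
        have e: "edge_flow Z S nx fl (xs ! (p - i)) (xs ! (p - i + 1)) = f" using assms(7) i by auto
        have "Suc p - i = p - i + 1" "Suc p - Suc i = p - i" using i by auto
        thus "edge_flow Z S nx fl (x i) (x (Suc i)) = f" unfolding x_def
          using fql.ef_sym[OF F a] e by metis
      qed
      show "\<exists>k\<le>p. x k \<in> Z \<union> S \<and> nx (x k) = x (Suc k)"
        using B unfolding x_def by (intro exI[of _ p]) auto
    qed
    have "norm (x 0 - x (Suc p)) = norm (xs ! 0 - xs ! (p + 1))"
      unfolding x_def by (simp add: norm_minus_commute)
    thus ?thesis using pth.final[OF P assms(2,1)] by simp
  qed
qed


end
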